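(* Let $\Omega\subset\mathbb{R}^2$ be open, $\lambda>0$, and let $u\in L^2(\Omega)$ satisfy $-\Delta u=\lambda u$ in $\Omega$. Let $\mathbf{x}_0\in\Omega$, $h>0$, and let $\mathbf{e}^-,\mathbf{e}^+$ be unit vectors with angle $\alpha\pi$ from $\mathbf{e}^-$ to $\mathbf{e}^+$, where $\alpha\in(0,2)$ is irrational; put $\Gamma^\pm=\{\mathbf{x}_0+t\mathbf{e}^\pm:0\le t\le h\}\subset\Omega$. Suppose $\Gamma^-$ is a singular line of $u$ ($\partial_\nu u=0$ on $\Gamma^-$, $\nu$ a unit normal to $\Gamma^-$) and $\Gamma^+$ is a nodal line of $u$ ($u=0$ on $\Gamma^+$). Then $\mathrm{Vani}(u;\mathbf{x}_0)=+\infty$.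
   Context: No boundary condition is imposed on $\partial\Omega$; $u$ is real-analytic in $\Omega$. $\mathrm{Vani}(u;\mathbf{x}_0)$ is the smallest degree of a nonzero homogeneous term in the Taylor expansion of $u$ at $\mathbf{x}_0$ ($+\infty$ if all vanish). *)

theory Defs
  imports "HOL-Analysis.Analysis" "HOL-Library.Extended_Nat"
begin

definition pdx :: "(real \<times> real \<Rightarrow> real) \<Rightarrow> real \<times> real \<Rightarrow> real" where
  "pdx f p = deriv (\<lambda>s. f (s, snd p)) (fst p)"

definition pdy :: "(real \<times> real \<Rightarrow> real) \<Rightarrow> real \<times> real \<Rightarrow> real" where
  "pdy f p = deriv (\<lambda>s. f (fst p, s)) (snd p)"

definition pderiv2 :: "nat \<Rightarrow> nat \<Rightarrow> (real \<times> real \<Rightarrow> real) \<Rightarrow> real \<times> real \<Rightarrow> real" where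
  "pderiv2 a b f = (pdx ^^ a) ((pdy ^^ b) f)"

definition laplacian :: "(real \<times> real \<Rightarrow> real) \<Rightarrow> real \<times> real \<Rightarrow> real" where
  "laplacian f p = pdx (pdx f) p + pdy (pdy f) p"

text \<open>Real-analyticity on a set: locally a convergent (absolutely summable) double power series.\<close>
definition real_analytic_on2 :: "(real \<times> real \<Rightarrow> real) \<Rightarrow> (real \<times> real) set \<Rightarrow> bool" where
  "real_analytic_on2 f S \<longleftrightarrow> (\<forall>p\<in>S. \<exists>r>0. \<exists>c :: nat \<Rightarrow> nat \<Rightarrow> real.
      \<forall>q\<in>ball p r. ((\<lambda>(a,b). c a b * (fst q - fst p)^a * (snd q - snd p)^b) has_sum f q) UNIV)"

definition Vani :: "(real \<times> real \<Rightarrow> real) \<Rightarrow> real \<times> real \<Rightarrow> enat" where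
  "Vani f p = (if \<forall>a b. pderiv2 a b f p = 0 then \<infinity>
               else enat (LEAST n. \<exists>a b. a + b = n \<and> pderiv2 a b f p \<noteq> 0))"

definition rot :: "real \<Rightarrow> real \<times> real \<Rightarrow> real \<times> real" where
  "rot \<theta> v = (cos \<theta> * fst v - sin \<theta> * snd v, sin \<theta> * fst v + cos \<theta> * snd v)"

definition segment_from :: "real \<times> real \<Rightarrow> real \<times> real \<Rightarrow> real \<Rightarrow> (real \<times> real) set" where
  "segment_from x0 e h = {x0 + t *\<^sub>R e | t. 0 \<le> t \<and> t \<le> h}"

end

theory Submission
  imports Defs
begin


definition Fs :: "(nat \<Rightarrow> nat \<Rightarrow> real) \<Rightarrow> real \<times> real \<Rightarrow> real \<times> real \<Rightarrow> real" where
  "Fs c p q = infsum (\<lambda>(a,b). c a b * (fst q - fst p)^a * (snd q - snd p)^b) UNIV"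

definition Sq :: "real \<times> real \<Rightarrow> real \<Rightarrow> (real \<times> real) set" where
  "Sq p \<rho> = {q. \<bar>fst q - fst p\<bar> < \<rho> \<and> \<bar>snd q - snd p\<bar> < \<rho>}"

definition good :: "(nat \<Rightarrow> nat \<Rightarrow> real) \<Rightarrow> real \<Rightarrow> bool" where
  "good c \<rho> \<longleftrightarrow> (\<forall>r. 0 \<le> r \<and> r < \<rho> \<longrightarrow> (\<lambda>(a,b). \<bar>c a b\<bar> * r^a * r^b) summable_on UNIV)"

definition Dx :: "(nat \<Rightarrow> nat \<Rightarrow> real) \<Rightarrow> nat \<Rightarrow> nat \<Rightarrow> real" where
  "Dx c a b = real (a+1) * c (a+1) b"

definition Dy :: "(nat \<Rightarrow> nat \<Rightarrow> real) \<Rightarrow> nat \<Rightarrow> nat \<Rightarrow> real" where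
  "Dy c a b = real (b+1) * c a (b+1)"

lemma bound_seq:
  fixes r1 r2 :: real
  assumes "0 \<le> r1" "r1 < r2"
  obtains K where "K \<ge> 0" "\<And>a. real a * r1^a \<le> K * r2^a"
proof -
  have r2: "r2 > 0" using assms by linarith
  have "norm (r1/r2) < 1" using assms r2 by (simp add: abs_of_nonneg divide_less_eq)
  from powser_times_n_limit_0[OF this] have "Bseq (\<lambda>n. of_nat n * (r1/r2)^n)"
    by (intro convergent_imp_Bseq convergentI)
  then obtain K where K: "K > 0" "\<And>n. norm (of_nat n * (r1/r2)^n :: real) \<le> K"
    by (auto elim: BseqE)
  show ?thesis
  proof (rule that[of K])
    fix a :: nat
    have "real a * (r1/r2)^a \<le> K" using K(2)[of a] by (simp add: abs_le_iff)
    hence "real a * (r1/r2)^a * r2^a \<le> K * r2^a" using r2 by (intro mult_right_mono) auto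
    thus "real a * r1^a \<le> K * r2^a" using r2 by (simp add: power_divide)
  qed (use K in auto)
qed

lemma W_a:
  assumes g: "good c \<rho>" and r: "0 \<le> r" "r < \<rho>"
  shows "(\<lambda>(a,b). real a * \<bar>c a b\<bar> * r^(a-1) * r^b) summable_on UNIV"
proof -
  define r1 where "r1 = (r + \<rho>)/2"
  define r2 where "r2 = (r1 + \<rho>)/2"
  have r1: "r \<le> r1" "0 < r1" "r1 < r2" "r2 < \<rho>" "0 \<le> r2" using r by (auto simp: r1_def r2_def)
  obtain K where K: "K \<ge> 0" "\<And>a. real a * r1^a \<le> K * r2^a" using bound_seq[of r1 r2] r1 by auto
  have sm: "(\<lambda>(a,b). \<bar>c a b\<bar> * r2^a * r2^b) summable_on UNIV" using g r1 unfolding good_def by auto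
  have key: "real a * r^(a-1) \<le> (K/r1) * r2^a" for a
  proof (cases a)
    case 0 thus ?thesis using K r1 by simp
  next
    case (Suc m)
    have "real a * r^(a-1) \<le> real a * r1^(a-1)" using r r1 by (intro mult_left_mono power_mono) auto
    also have "\<dots> = real a * r1^a / r1" using Suc r1 by simp
    also have "\<dots> \<le> K * r2^a / r1" using K(2)[of a] r1 by (intro divide_right_mono) auto
    finally show ?thesis by simp
  qed
  show ?thesis
  proof (rule summable_on_comparison_test)
    show "(\<lambda>x. (K/r1) * (case x of (a,b) \<Rightarrow> \<bar>c a b\<bar> * r2^a * r2^b)) summable_on UNIV"
      by (rule summable_on_cmult_right[OF sm])
  next
    fix x :: "nat \<times> nat"
    obtain a b where x: "x = (a,b)" by fastforce
    have l1: "\<bar>c a b\<bar> * (real a * r^(a-1)) \<le> \<bar>c a b\<bar> * ((K/r1) * r2^a)"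
      using key[of a] by (intro mult_left_mono) auto
    have l2: "r^b \<le> r2^b" using r r1 by (intro power_mono) auto
    have l3: "0 \<le> \<bar>c a b\<bar> * ((K/r1) * r2^a)" using K r1 by auto
    have "\<bar>c a b\<bar> * (real a * r^(a-1)) * r^b \<le> \<bar>c a b\<bar> * ((K/r1) * r2^a) * r2^b"
      by (rule mult_mono[OF l1 l2 l3]) (use r in simp)
    thus "(case x of (a,b) \<Rightarrow> real a * \<bar>c a b\<bar> * r^(a-1) * r^b) \<le> (K/r1) * (case x of (a,b) \<Rightarrow> \<bar>c a b\<bar> * r2^a * r2^b)"
      by (simp add: x algebra_simps)
    show "0 \<le> (case x of (a,b) \<Rightarrow> real a * \<bar>c a b\<bar> * r^(a-1) * r^b)" using r by (simp add: x)
  qed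
qed

lemma W_b:
  assumes g: "good c \<rho>" and r: "0 \<le> r" "r < \<rho>"
  shows "(\<lambda>(a,b). real b * \<bar>c a b\<bar> * r^a * r^(b-1)) summable_on UNIV"
proof -
  define r1 where "r1 = (r + \<rho>)/2"
  define r2 where "r2 = (r1 + \<rho>)/2"
  have r1: "r \<le> r1" "0 < r1" "r1 < r2" "r2 < \<rho>" "0 \<le> r2" using r by (auto simp: r1_def r2_def)
  obtain K where K: "K \<ge> 0" "\<And>a. real a * r1^a \<le> K * r2^a" using bound_seq[of r1 r2] r1 by auto
  have sm: "(\<lambda>(a,b). \<bar>c a b\<bar> * r2^a * r2^b) summable_on UNIV" using g r1 unfolding good_def by auto
  have key: "real a * r^(a-1) \<le> (K/r1) * r2^a" for a
  proof (cases a)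
    case 0 thus ?thesis using K r1 by simp
  next
    case (Suc m)
    have "real a * r^(a-1) \<le> real a * r1^(a-1)" using r r1 by (intro mult_left_mono power_mono) auto
    also have "\<dots> = real a * r1^a / r1" using Suc r1 by simp
    also have "\<dots> \<le> K * r2^a / r1" using K(2)[of a] r1 by (intro divide_right_mono) auto
    finally show ?thesis by simp
  qed
  show ?thesis
  proof (rule summable_on_comparison_test)
    show "(\<lambda>x. (K/r1) * (case x of (a,b) \<Rightarrow> \<bar>c a b\<bar> * r2^a * r2^b)) summable_on UNIV"
      by (rule summable_on_cmult_right[OF sm])
  next
    fix x :: "nat \<times> nat"
    obtain a b where x: "x = (a,b)" by fastforce
    have l1: "\<bar>c a b\<bar> * (real b * r^(b-1)) \<le> \<bar>c a b\<bar> * ((K/r1) * r2^b)"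
      using key[of b] by (intro mult_left_mono) auto
    have l2: "r^a \<le> r2^a" using r r1 by (intro power_mono) auto
    have l3: "0 \<le> \<bar>c a b\<bar> * ((K/r1) * r2^b)" using K r1 by auto
    have "\<bar>c a b\<bar> * (real b * r^(b-1)) * r^a \<le> \<bar>c a b\<bar> * ((K/r1) * r2^b) * r2^a"
      by (rule mult_mono[OF l1 l2 l3]) (use r in simp)
    thus "(case x of (a,b) \<Rightarrow> real b * \<bar>c a b\<bar> * r^a * r^(b-1)) \<le> (K/r1) * (case x of (a,b) \<Rightarrow> \<bar>c a b\<bar> * r2^a * r2^b)"
      by (simp add: x algebra_simps)
    show "0 \<le> (case x of (a,b) \<Rightarrow> real b * \<bar>c a b\<bar> * r^a * r^(b-1))" using r by (simp add: x)
  qed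
qed

lemma summable_by_abs:
  fixes f g :: "'a \<Rightarrow> real"
  assumes "g summable_on A" "\<And>x. x \<in> A \<Longrightarrow> \<bar>f x\<bar> \<le> g x"
  shows "f summable_on A"
proof -
  have "(\<lambda>x. norm (f x)) summable_on A"
    by (rule summable_on_comparison_test[OF assms(1)]) (use assms(2) in auto)
  thus ?thesis using summable_on_iff_abs_summable_on_real by blast
qed

lemma good_Dx:
  assumes g: "good c \<rho>"
  shows "good (Dx c) \<rho>"
  unfolding good_def
proof (intro allI impI)
  fix r :: real assume r: "0 \<le> r \<and> r < \<rho>"
  define h where "h = (\<lambda>(a,b). real a * \<bar>c a b\<bar> * r^(a-1) * r^b)"
  define gg where "gg = (\<lambda>(a::nat,b::nat). (a+1,b))"
  have "h summable_on UNIV" using W_a[OF g] r by (simp add: h_def)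
  hence "h summable_on gg ` UNIV" by (rule summable_on_subset_banach) auto
  moreover have "inj gg" by (auto simp: gg_def inj_def)
  ultimately have "(h \<circ> gg) summable_on UNIV" by (simp add: summable_on_reindex)
  moreover have "h \<circ> gg = (\<lambda>(a,b). \<bar>Dx c a b\<bar> * r^a * r^b)"
    by (auto simp: h_def gg_def Dx_def abs_mult)
  ultimately show "(\<lambda>(a,b). \<bar>Dx c a b\<bar> * r^a * r^b) summable_on UNIV" by simp
qed

lemma good_Dy:
  assumes g: "good c \<rho>"
  shows "good (Dy c) \<rho>"
  unfolding good_def
proof (intro allI impI)
  fix r :: real assume r: "0 \<le> r \<and> r < \<rho>"
  define h where "h = (\<lambda>(a,b). real b * \<bar>c a b\<bar> * r^a * r^(b-1))"
  define gg where "gg = (\<lambda>(a::nat,b::nat). (a,b+1))"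
  have "h summable_on UNIV" using W_b[OF g] r by (simp add: h_def)
  hence "h summable_on gg ` UNIV" by (rule summable_on_subset_banach) auto
  moreover have "inj gg" by (auto simp: gg_def inj_def)
  ultimately have "(h \<circ> gg) summable_on UNIV" by (simp add: summable_on_reindex)
  moreover have "h \<circ> gg = (\<lambda>(a,b). \<bar>Dy c a b\<bar> * r^a * r^b)"
    by (auto simp: h_def gg_def Dy_def abs_mult)
  ultimately show "(\<lambda>(a,b). \<bar>Dy c a b\<bar> * r^a * r^b) summable_on UNIV" by simp
qed

lemma good_add:
  assumes "good c \<rho>" "good d \<rho>"
  shows "good (\<lambda>a b. c a b + d a b) \<rho>"
  unfolding good_def
proof (intro allI impI)
  fix r :: real assume r: "0 \<le> r \<and> r < \<rho>"
  have "(\<lambda>x. (case x of (a,b) \<Rightarrow> \<bar>c a b\<bar> * r^a * r^b) + (case x of (a,b) \<Rightarrow> \<bar>d a b\<bar> * r^a * r^b)) summable_on UNIV"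
    using assms r unfolding good_def by (intro summable_on_add) auto
  thus "(\<lambda>(a,b). \<bar>c a b + d a b\<bar> * r^a * r^b) summable_on UNIV"
  proof (rule summable_on_comparison_test)
    fix x :: "nat \<times> nat" obtain a b where x: "x = (a,b)" by fastforce
    have "\<bar>c a b + d a b\<bar> * (r^a * r^b) \<le> (\<bar>c a b\<bar> + \<bar>d a b\<bar>) * (r^a * r^b)"
      using r by (intro mult_right_mono abs_triangle_ineq) auto
    thus "(case x of (a,b) \<Rightarrow> \<bar>c a b + d a b\<bar> * r^a * r^b) \<le> (case x of (a,b) \<Rightarrow> \<bar>c a b\<bar> * r^a * r^b) + (case x of (a,b) \<Rightarrow> \<bar>d a b\<bar> * r^a * r^b)"
      by (simp add: x algebra_simps)
  qed (use r in auto)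
qed

lemma good_cmult:
  assumes "good c \<rho>"
  shows "good (\<lambda>a b. k * c a b) \<rho>"
  unfolding good_def
proof (intro allI impI)
  fix r :: real assume r: "0 \<le> r \<and> r < \<rho>"
  have "(\<lambda>x. \<bar>k\<bar> * (case x of (a,b) \<Rightarrow> \<bar>c a b\<bar> * r^a * r^b)) summable_on UNIV"
    using assms r unfolding good_def by (intro summable_on_cmult_right) auto
  moreover have "(\<lambda>x. \<bar>k\<bar> * (case x of (a,b) \<Rightarrow> \<bar>c a b\<bar> * r^a * r^b)) = (\<lambda>(a,b). \<bar>k * c a b\<bar> * r^a * r^b)"
    by (auto simp: abs_mult)
  ultimately show "(\<lambda>(a,b). \<bar>k * c a b\<bar> * r^a * r^b) summable_on UNIV" by simp
qed

lemma summable_at: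
  assumes g: "good c \<rho>" and x: "\<bar>x\<bar> \<le> r" and y: "\<bar>y\<bar> \<le> r" and r: "r < \<rho>"
  shows "(\<lambda>(a,b). c a b * x^a * y^b) summable_on UNIV"
proof (rule summable_by_abs)
  show "(\<lambda>(a,b). \<bar>c a b\<bar> * r^a * r^b) summable_on UNIV" using g x r unfolding good_def by auto
  fix z :: "nat \<times> nat" obtain a b where z: "z = (a,b)" by fastforce
  have "\<bar>x\<bar>^a * \<bar>y\<bar>^b \<le> r^a * r^b" using x y by (intro mult_mono power_mono) auto
  hence "\<bar>c a b\<bar> * (\<bar>x\<bar>^a * \<bar>y\<bar>^b) \<le> \<bar>c a b\<bar> * (r^a * r^b)" by (intro mult_left_mono) auto
  thus "\<bar>case z of (a,b) \<Rightarrow> c a b * x^a * y^b\<bar> \<le> (case z of (a,b) \<Rightarrow> \<bar>c a b\<bar> * r^a * r^b)"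
    by (simp add: z abs_mult power_abs algebra_simps)
qed

lemma summable_Sq:
  assumes g: "good c \<rho>" and q: "q \<in> Sq p \<rho>"
  shows "(\<lambda>(a,b). c a b * (fst q - fst p)^a * (snd q - snd p)^b) summable_on UNIV"
  using q by (intro summable_at[OF g, of _ "max \<bar>fst q - fst p\<bar> \<bar>snd q - snd p\<bar>"]) (auto simp: Sq_def)

lemma Fs_add:
  assumes "good c \<rho>" "good d \<rho>" "q \<in> Sq p \<rho>"
  shows "Fs (\<lambda>a b. c a b + d a b) p q = Fs c p q + Fs d p q"
proof -
  have "Fs (\<lambda>a b. c a b + d a b) p q = infsum (\<lambda>x. (case x of (a,b) \<Rightarrow> c a b * (fst q - fst p)^a * (snd q - snd p)^b)
          + (case x of (a,b) \<Rightarrow> d a b * (fst q - fst p)^a * (snd q - snd p)^b)) UNIV"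
    unfolding Fs_def by (intro infsum_cong) (auto simp: algebra_simps)
  also have "\<dots> = Fs c p q + Fs d p q"
    unfolding Fs_def using assms by (intro infsum_add summable_Sq) 
  finally show ?thesis .
qed

lemma Fs_cmult:
  "Fs (\<lambda>a b. k * c a b) p q = k * Fs c p q"
proof -
  have "Fs (\<lambda>a b. k * c a b) p q = infsum (\<lambda>x. k * (case x of (a,b) \<Rightarrow> c a b * (fst q - fst p)^a * (snd q - snd p)^b)) UNIV"
    unfolding Fs_def by (intro infsum_cong) (auto simp: algebra_simps)
  also have "\<dots> = k * Fs c p q" unfolding Fs_def by (rule infsum_cmult_right')
  finally show ?thesis .
qed

lemma Fs_Dx_eq:
  "Fs (Dx c) p q = infsum (\<lambda>(a,b). real a * c a b * (fst q - fst p)^(a-1) * (snd q - snd p)^b) UNIV"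
proof -
  define A where "A = (\<lambda>(a,b). real a * c a b * (fst q - fst p)^(a-1) * (snd q - snd p)^b)"
  define gg where "gg = (\<lambda>(a::nat,b::nat). (a+1,b))"
  have "inj gg" by (auto simp: gg_def inj_def)
  have "Fs (Dx c) p q = infsum (A \<circ> gg) UNIV"
    unfolding Fs_def by (intro infsum_cong) (auto simp: A_def gg_def Dx_def)
  also have "\<dots> = infsum A (gg ` UNIV)" using \<open>inj gg\<close> by (simp add: infsum_reindex)
  also have "\<dots> = infsum A UNIV"
  proof (rule infsum_cong_neutral)
    fix x assume "x \<in> UNIV - gg ` UNIV"
    then obtain a b where x: "x = (a,b)" "x \<notin> range gg" by (cases x) auto
    have "a = 0"
    proof (rule ccontr)
      assume "a \<noteq> 0" then have "x = gg (a-1,b)" by (simp add: x gg_def)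
      thus False using x by auto
    qed
    thus "A x = 0" by (simp add: A_def x)
  qed auto
  finally show ?thesis by (simp add: A_def)
qed

lemma Fs_Dy_eq:
  "Fs (Dy c) p q = infsum (\<lambda>(a,b). real b * c a b * (fst q - fst p)^a * (snd q - snd p)^(b-1)) UNIV"
proof -
  define A where "A = (\<lambda>(a,b). real b * c a b * (fst q - fst p)^a * (snd q - snd p)^(b-1))"
  define gg where "gg = (\<lambda>(a::nat,b::nat). (a,b+1))"
  have "inj gg" by (auto simp: gg_def inj_def)
  have "Fs (Dy c) p q = infsum (A \<circ> gg) UNIV"
    unfolding Fs_def by (intro infsum_cong) (auto simp: A_def gg_def Dy_def)
  also have "\<dots> = infsum A (gg ` UNIV)" using \<open>inj gg\<close> by (simp add: infsum_reindex)
  also have "\<dots> = infsum A UNIV"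
  proof (rule infsum_cong_neutral)
    fix x assume "x \<in> UNIV - gg ` UNIV"
    then obtain a b where x: "x = (a,b)" "x \<notin> range gg" by (cases x) auto
    have "b = 0"
    proof (rule ccontr)
      assume "b \<noteq> 0" then have "x = gg (a,b-1)" by (simp add: x gg_def)
      thus False using x by auto
    qed
    thus "A x = 0" by (simp add: A_def x)
  qed auto
  finally show ?thesis by (simp add: A_def)
qed

lemma pair_to_nat:
  fixes g :: "nat \<times> nat \<Rightarrow> real"
  assumes "(g has_sum s) UNIV"
  shows "(\<lambda>k. g (prod_decode k)) sums s"
proof -
  have "bij_betw prod_decode UNIV UNIV" using bij_prod_decode by (simp add: bij_betw_def bij_def)
  hence "((\<lambda>k. g (prod_decode k)) has_sum s) UNIV" using assms by (simp add: has_sum_reindex_bij_betw)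
  thus ?thesis by (rule has_sum_imp_sums)
qed



lemma deriv_term_bound:
  fixes u1 u2 r n1 n2 cc :: real
  assumes "\<bar>u1\<bar> \<le> r" "\<bar>u2\<bar> \<le> r"
  shows "\<bar>cc * (real a * u1^(a-1) * n1 * u2^b + u1^a * (real b * u2^(b-1) * n2))\<bar>
     \<le> \<bar>cc\<bar> * (real a * r^(a-1) * \<bar>n1\<bar> * r^b + r^a * (real b * r^(b-1) * \<bar>n2\<bar>))"
proof -
  have r: "0 \<le> r" using assms by linarith
  have p1: "\<bar>u1\<bar>^k \<le> r^k" for k using assms by (intro power_mono) auto
  have p2: "\<bar>u2\<bar>^k \<le> r^k" for k using assms by (intro power_mono) auto
  have t1: "\<bar>real a * u1^(a-1) * n1 * u2^b\<bar> \<le> real a * r^(a-1) * \<bar>n1\<bar> * r^b"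
  proof -
    have "\<bar>real a * u1^(a-1) * n1 * u2^b\<bar> = real a * \<bar>u1\<bar>^(a-1) * \<bar>n1\<bar> * \<bar>u2\<bar>^b"
      by (simp add: abs_mult power_abs)
    also have "\<dots> \<le> real a * r^(a-1) * \<bar>n1\<bar> * r^b"
      using p1 p2 r by (intro mult_mono mult_left_mono) auto
    finally show ?thesis .
  qed
  have t2: "\<bar>u1^a * (real b * u2^(b-1) * n2)\<bar> \<le> r^a * (real b * r^(b-1) * \<bar>n2\<bar>)"
  proof -
    have "\<bar>u1^a * (real b * u2^(b-1) * n2)\<bar> = \<bar>u1\<bar>^a * (real b * \<bar>u2\<bar>^(b-1) * \<bar>n2\<bar>)"
      by (simp add: abs_mult power_abs)
    also have "\<dots> \<le> r^a * (real b * r^(b-1) * \<bar>n2\<bar>)"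
      using p1 p2 r by (intro mult_mono mult_left_mono mult_right_mono) auto
    finally show ?thesis .
  qed
  have "\<bar>real a * u1^(a-1) * n1 * u2^b + u1^a * (real b * u2^(b-1) * n2)\<bar>
      \<le> real a * r^(a-1) * \<bar>n1\<bar> * r^b + r^a * (real b * r^(b-1) * \<bar>n2\<bar>)"
    using t1 t2 abs_triangle_ineq by (smt (verit))
  hence "\<bar>cc\<bar> * \<bar>real a * u1^(a-1) * n1 * u2^b + u1^a * (real b * u2^(b-1) * n2)\<bar>
      \<le> \<bar>cc\<bar> * (real a * r^(a-1) * \<bar>n1\<bar> * r^b + r^a * (real b * r^(b-1) * \<bar>n2\<bar>))"
    by (rule mult_left_mono) simp
  thus ?thesis by (simp add: abs_mult)
qed

lemma DIR:
  assumes g: "good c \<rho>" and q: "q \<in> Sq p \<rho>"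
  shows "((\<lambda>s. Fs c p (q + s *\<^sub>R n)) has_real_derivative
           (fst n * Fs (Dx c) p q + snd n * Fs (Dy c) p q)) (at 0)"
proof -
  define x where "x = fst q - fst p"
  define y where "y = snd q - snd p"
  define n1 where "n1 = fst n"
  define n2 where "n2 = snd n"
  define m where "m = max \<bar>x\<bar> \<bar>y\<bar>"
  have m: "m < \<rho>" "0 \<le> m" using q by (auto simp: Sq_def m_def x_def y_def)
  define r where "r = (m + \<rho>)/2"
  have r: "m < r" "r < \<rho>" "0 \<le> r" using m by (auto simp: r_def)
  define \<epsilon> where "\<epsilon> = (r - m) / (\<bar>n1\<bar> + \<bar>n2\<bar> + 1)"
  have eps: "\<epsilon> > 0" using r by (auto simp: \<epsilon>_def intro!: divide_pos_pos add_nonneg_pos)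
  have bnd: "\<bar>x + s * n1\<bar> \<le> r \<and> \<bar>y + s * n2\<bar> \<le> r" if "s \<in> ball 0 \<epsilon>" for s
  proof -
    have s: "\<bar>s\<bar> < \<epsilon>" using that by (simp add: dist_norm)
    have e: "\<epsilon> * (\<bar>n1\<bar> + \<bar>n2\<bar> + 1) = r - m" unfolding \<epsilon>_def by (simp add: add_nonneg_pos)
    have "\<bar>s\<bar> * \<bar>n1\<bar> \<le> \<epsilon> * \<bar>n1\<bar>" "\<bar>s\<bar> * \<bar>n2\<bar> \<le> \<epsilon> * \<bar>n2\<bar>" using s by (auto intro: mult_right_mono)
    moreover have "\<bar>x\<bar> \<le> m" "\<bar>y\<bar> \<le> m" by (auto simp: m_def)
    moreover have "\<bar>x + s*n1\<bar> \<le> \<bar>x\<bar> + \<bar>s\<bar> * \<bar>n1\<bar>" "\<bar>y + s*n2\<bar> \<le> \<bar>y\<bar> + \<bar>s\<bar> * \<bar>n2\<bar>"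
      by (auto simp: abs_mult intro: abs_triangle_ineq[THEN order_trans])
    ultimately show ?thesis using e eps by (smt (verit) distrib_left mult_nonneg_nonneg abs_ge_zero)
  qed
  define e where "e = prod_decode"
  define f where "f = (\<lambda>k s. case e k of (a,b) \<Rightarrow> c a b * (x + s*n1)^a * (y + s*n2)^b)"
  define f' where "f' = (\<lambda>k s. case e k of (a,b) \<Rightarrow>
      c a b * (real a * (x + s*n1)^(a-1) * n1 * (y + s*n2)^b + (x + s*n1)^a * (real b * (y + s*n2)^(b-1) * n2)))"
  define M where "M = (\<lambda>(a,b). \<bar>c a b\<bar> * (real a * r^(a-1) * \<bar>n1\<bar> * r^b + r^a * (real b * r^(b-1) * \<bar>n2\<bar>)))"
  have der: "(f k has_field_derivative f' k s) (at s within ball 0 \<epsilon>)" for k s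
  proof -
    obtain a b where ab: "e k = (a,b)" by fastforce
    show ?thesis unfolding f_def f'_def ab
      by (auto intro!: derivative_eq_intros simp: algebra_simps)
  qed
  have Msum: "M summable_on UNIV"
  proof -
    have "(\<lambda>z. \<bar>n1\<bar> * (case z of (a,b) \<Rightarrow> real a * \<bar>c a b\<bar> * r^(a-1) * r^b)
             + \<bar>n2\<bar> * (case z of (a,b) \<Rightarrow> real b * \<bar>c a b\<bar> * r^a * r^(b-1))) summable_on UNIV"
      using W_a[OF g r(3,2)] W_b[OF g r(3,2)] by (intro summable_on_add summable_on_cmult_right)
    moreover have "(\<lambda>z. \<bar>n1\<bar> * (case z of (a,b) \<Rightarrow> real a * \<bar>c a b\<bar> * r^(a-1) * r^b)
             + \<bar>n2\<bar> * (case z of (a,b) \<Rightarrow> real b * \<bar>c a b\<bar> * r^a * r^(b-1))) = M"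
      by (auto simp: M_def algebra_simps)
    ultimately show ?thesis by simp
  qed
  have bij: "bij_betw e UNIV UNIV" using bij_prod_decode by (simp add: e_def bij_betw_def bij_def)
  have "(\<lambda>k. M (e k)) summable_on UNIV" using Msum bij by (simp add: summable_on_reindex_bij_betw)
  hence Msum': "summable (\<lambda>k. M (e k))"
    by (subst (asm) summable_on_UNIV_nonneg_real_iff)
       (use r(3) in \<open>auto simp: M_def split: prod.splits intro!: mult_nonneg_nonneg add_nonneg_nonneg\<close>)
  have unif: "uniformly_convergent_on (ball 0 \<epsilon>) (\<lambda>n s. \<Sum>i<n. f' i s)"
  proof (rule Weierstrass_m_test'[OF _ Msum'])
    fix k and s :: real assume s: "s \<in> ball 0 \<epsilon>"
    obtain a b where ab: "e k = (a,b)" by fastforce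
    show "norm (f' k s) \<le> M (e k)" unfolding f'_def ab M_def
      using deriv_term_bound[of "x + s*n1" r "y + s*n2"] bnd[OF s] by simp
  qed
  have sum0: "(\<lambda>(a,b). c a b * x^a * y^b) summable_on UNIV"
    using summable_Sq[OF g q] by (simp add: x_def y_def)
  have fs: "(\<lambda>k. f k s) sums Fs c p (q + s *\<^sub>R n)" if s: "s \<in> ball 0 \<epsilon>" for s
  proof -
    have "(\<lambda>(a,b). c a b * (x + s*n1)^a * (y + s*n2)^b) summable_on UNIV"
      using bnd[OF s] r by (intro summable_at[OF g]) auto
    hence "((\<lambda>(a,b). c a b * (x + s*n1)^a * (y + s*n2)^b) has_sum Fs c p (q + s *\<^sub>R n)) UNIV"
      unfolding Fs_def by (simp add: x_def y_def n1_def n2_def algebra_simps)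
    from pair_to_nat[OF this] show ?thesis by (simp add: f_def e_def)
  qed
  have "summable (\<lambda>k. f k 0)" using fs[of 0] eps by (auto simp: sums_iff)
  from has_field_derivative_series'(2)[OF convex_ball der unif _ this, of 0] eps
  have D: "((\<lambda>s. \<Sum>k. f k s) has_field_derivative (\<Sum>k. f' k 0)) (at 0)" by auto
  have D2: "((\<lambda>s. Fs c p (q + s *\<^sub>R n)) has_field_derivative (\<Sum>k. f' k 0)) (at 0)"
    by (rule has_field_derivative_transform_within_open[OF D, of "ball 0 \<epsilon>"])
       (use eps fs in \<open>auto simp: sums_iff\<close>)
  define A where "A = (\<lambda>(a,b). real a * c a b * x^(a-1) * y^b)"
  define B where "B = (\<lambda>(a,b). real b * c a b * x^a * y^(b-1))"
  have Asum: "A summable_on UNIV"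
  proof (rule summable_by_abs)
    show "(\<lambda>(a,b). real a * \<bar>c a b\<bar> * r^(a-1) * r^b) summable_on UNIV" using W_a[OF g r(3,2)] .
    fix z :: "nat\<times>nat" obtain a b where z: "z = (a,b)" by fastforce
    have "\<bar>x\<bar> \<le> r" "\<bar>y\<bar> \<le> r" using r by (auto simp: m_def)
    hence "\<bar>x\<bar>^(a-1) * \<bar>y\<bar>^b \<le> r^(a-1) * r^b" by (intro mult_mono power_mono) auto
    hence "(real a * \<bar>c a b\<bar>) * (\<bar>x\<bar>^(a-1) * \<bar>y\<bar>^b) \<le> (real a * \<bar>c a b\<bar>) * (r^(a-1) * r^b)"
      by (intro mult_left_mono) auto
    thus "\<bar>A z\<bar> \<le> (case z of (a,b) \<Rightarrow> real a * \<bar>c a b\<bar> * r^(a-1) * r^b)"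
      by (simp add: A_def z abs_mult power_abs algebra_simps)
  qed
  have Bsum: "B summable_on UNIV"
  proof (rule summable_by_abs)
    show "(\<lambda>(a,b). real b * \<bar>c a b\<bar> * r^a * r^(b-1)) summable_on UNIV" using W_b[OF g r(3,2)] .
    fix z :: "nat\<times>nat" obtain a b where z: "z = (a,b)" by fastforce
    have "\<bar>x\<bar> \<le> r" "\<bar>y\<bar> \<le> r" using r by (auto simp: m_def)
    hence "\<bar>x\<bar>^a * \<bar>y\<bar>^(b-1) \<le> r^a * r^(b-1)" by (intro mult_mono power_mono) auto
    hence "(real b * \<bar>c a b\<bar>) * (\<bar>x\<bar>^a * \<bar>y\<bar>^(b-1)) \<le> (real b * \<bar>c a b\<bar>) * (r^a * r^(b-1))"
      by (intro mult_left_mono) auto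
    thus "\<bar>B z\<bar> \<le> (case z of (a,b) \<Rightarrow> real b * \<bar>c a b\<bar> * r^a * r^(b-1))"
      by (simp add: B_def z abs_mult power_abs algebra_simps)
  qed
  have "((\<lambda>z. n1 * A z + n2 * B z) has_sum (n1 * infsum A UNIV + n2 * infsum B UNIV)) UNIV"
    using Asum Bsum by (intro has_sum_add has_sum_cmult_right has_sum_infsum)
  from pair_to_nat[OF this]
  have "(\<lambda>k. n1 * A (e k) + n2 * B (e k)) sums (n1 * infsum A UNIV + n2 * infsum B UNIV)"
    by (simp add: e_def)
  moreover have "(\<lambda>k. n1 * A (e k) + n2 * B (e k)) = (\<lambda>k. f' k 0)"
  proof
    fix k obtain a b where ab: "e k = (a,b)" by fastforce
    show "n1 * A (e k) + n2 * B (e k) = f' k 0" by (simp add: ab f'_def A_def B_def algebra_simps)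
  qed
  ultimately have "(\<lambda>k. f' k 0) sums (n1 * infsum A UNIV + n2 * infsum B UNIV)" by simp
  hence "(\<Sum>k. f' k 0) = fst n * Fs (Dx c) p q + snd n * Fs (Dy c) p q"
    by (simp add: sums_iff Fs_Dx_eq Fs_Dy_eq A_def B_def x_def y_def n1_def n2_def)
  with D2 show ?thesis by simp
qed



lemma open_Sq: "open (Sq p \<rho>)"
  unfolding Sq_def by (intro open_Collect_conj open_Collect_less continuous_intros)

lemma center_Sq: "\<rho> > 0 \<Longrightarrow> p \<in> Sq p \<rho>"
  by (simp add: Sq_def)

lemma pdx_Fs:
  assumes g: "good c \<rho>" and q: "q \<in> Sq p \<rho>"
  shows "pdx (Fs c p) q = Fs (Dx c) p q"
proof -
  have D: "((\<lambda>s. Fs c p (q + s *\<^sub>R (1,0))) has_real_derivative Fs (Dx c) p q) (at (fst q + - fst q))"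
    using DIR[OF g q, of "(1,0)"] by simp
  have "((\<lambda>s. Fs c p (q + (s + - fst q) *\<^sub>R (1,0))) has_real_derivative Fs (Dx c) p q) (at (fst q))"
    using D by (subst (asm) DERIV_shift) 
  moreover have "(\<lambda>s. Fs c p (q + (s + - fst q) *\<^sub>R (1,0))) = (\<lambda>s. Fs c p (s, snd q))"
    by (intro ext) (cases q, simp)
  ultimately have "((\<lambda>s. Fs c p (s, snd q)) has_real_derivative Fs (Dx c) p q) (at (fst q))" by simp
  thus ?thesis unfolding pdx_def by (rule DERIV_imp_deriv)
qed

lemma pdy_Fs:
  assumes g: "good c \<rho>" and q: "q \<in> Sq p \<rho>"
  shows "pdy (Fs c p) q = Fs (Dy c) p q"
proof -
  have D: "((\<lambda>s. Fs c p (q + s *\<^sub>R (0,1))) has_real_derivative Fs (Dy c) p q) (at (snd q + - snd q))"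
    using DIR[OF g q, of "(0,1)"] by simp
  have "((\<lambda>s. Fs c p (q + (s + - snd q) *\<^sub>R (0,1))) has_real_derivative Fs (Dy c) p q) (at (snd q))"
    using D by (subst (asm) DERIV_shift) 
  moreover have "(\<lambda>s. Fs c p (q + (s + - snd q) *\<^sub>R (0,1))) = (\<lambda>s. Fs c p (fst q, s))"
    by (intro ext) (cases q, simp)
  ultimately have "((\<lambda>s. Fs c p (fst q, s)) has_real_derivative Fs (Dy c) p q) (at (snd q))" by simp
  thus ?thesis unfolding pdy_def by (rule DERIV_imp_deriv)
qed

lemma pdx_local:
  assumes S: "open S" and eq: "\<forall>z\<in>S. f z = g z" and q: "q \<in> S"
  shows "pdx f q = pdx g q"
proof -
  have o: "open ((\<lambda>s. (s, snd q)) -` S)" using S by (intro continuous_open_vimage continuous_intros)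
  have "eventually (\<lambda>s. s \<in> (\<lambda>s. (s, snd q)) -` S) (nhds (fst q))"
    using q by (intro eventually_nhds_in_open[OF o]) auto
  hence "eventually (\<lambda>s. f (s, snd q) = g (s, snd q)) (nhds (fst q))"
    by eventually_elim (use eq in auto)
  thus ?thesis unfolding pdx_def by (intro deriv_cong_ev) auto
qed

lemma pdy_local:
  assumes S: "open S" and eq: "\<forall>z\<in>S. f z = g z" and q: "q \<in> S"
  shows "pdy f q = pdy g q"
proof -
  have o: "open ((\<lambda>s. (fst q, s)) -` S)" using S by (intro continuous_open_vimage continuous_intros)
  have "eventually (\<lambda>s. s \<in> (\<lambda>s. (fst q, s)) -` S) (nhds (snd q))"
    using q by (intro eventually_nhds_in_open[OF o]) auto
  hence "eventually (\<lambda>s. f (fst q, s) = g (fst q, s)) (nhds (snd q))"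
    by eventually_elim (use eq in auto)
  thus ?thesis unfolding pdy_def by (intro deriv_cong_ev) auto
qed

lemma pdx_pow_local:
  assumes S: "open S" and eq: "\<forall>z\<in>S. f z = g z"
  shows "\<forall>z\<in>S. (pdx^^a) f z = (pdx^^a) g z"
proof (induction a)
  case 0 thus ?case using eq by simp
next
  case (Suc a) thus ?case using pdx_local[OF S Suc] by simp
qed

lemma pdy_pow_local:
  assumes S: "open S" and eq: "\<forall>z\<in>S. f z = g z"
  shows "\<forall>z\<in>S. (pdy^^a) f z = (pdy^^a) g z"
proof (induction a)
  case 0 thus ?case using eq by simp
next
  case (Suc a) thus ?case using pdy_local[OF S Suc] by simp
qed

lemma pderiv2_local:
  assumes S: "open S" and eq: "\<forall>z\<in>S. f z = g z" and q: "q \<in> S"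
  shows "pderiv2 a b f q = pderiv2 a b g q"
  unfolding pderiv2_def using pdx_pow_local[OF S pdy_pow_local[OF S eq]] q by blast

lemma pdy_pow_Fs:
  assumes g: "good c \<rho>"
  shows "good ((Dy^^b) c) \<rho> \<and> (\<forall>q\<in>Sq p \<rho>. (pdy^^b) (Fs c p) q = Fs ((Dy^^b) c) p q)"
proof (induction b)
  case 0 thus ?case using g by simp
next
  case (Suc b)
  have g': "good ((Dy^^Suc b) c) \<rho>" using good_Dy Suc by simp
  have e: "\<forall>q\<in>Sq p \<rho>. pdy ((pdy^^b) (Fs c p)) q = pdy (Fs ((Dy^^b) c) p) q"
    using pdy_local[OF open_Sq] Suc by blast
  have "\<forall>q\<in>Sq p \<rho>. (pdy^^Suc b) (Fs c p) q = Fs ((Dy^^Suc b) c) p q"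
  proof
    fix q assume q: "q \<in> Sq p \<rho>"
    have "(pdy^^Suc b) (Fs c p) q = pdy ((pdy^^b) (Fs c p)) q" by simp
    also have "\<dots> = pdy (Fs ((Dy^^b) c) p) q" using e q by blast
    also have "\<dots> = Fs (Dy ((Dy^^b) c)) p q" using pdy_Fs[OF Suc[THEN conjunct1] q] .
    finally show "(pdy^^Suc b) (Fs c p) q = Fs ((Dy^^Suc b) c) p q" by simp
  qed
  thus ?case using g' by simp
qed

lemma pdx_pow_Fs:
  assumes g: "good c \<rho>"
  shows "good ((Dx^^a) c) \<rho> \<and> (\<forall>q\<in>Sq p \<rho>. (pdx^^a) (Fs c p) q = Fs ((Dx^^a) c) p q)"
proof (induction a)
  case 0 thus ?case using g by simp
next
  case (Suc a)
  have g': "good ((Dx^^Suc a) c) \<rho>" using good_Dx Suc by simp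
  have e: "\<forall>q\<in>Sq p \<rho>. pdx ((pdx^^a) (Fs c p)) q = pdx (Fs ((Dx^^a) c) p) q"
    using pdx_local[OF open_Sq] Suc by blast
  have "\<forall>q\<in>Sq p \<rho>. (pdx^^Suc a) (Fs c p) q = Fs ((Dx^^Suc a) c) p q"
  proof
    fix q assume q: "q \<in> Sq p \<rho>"
    have "(pdx^^Suc a) (Fs c p) q = pdx ((pdx^^a) (Fs c p)) q" by simp
    also have "\<dots> = pdx (Fs ((Dx^^a) c) p) q" using e q by blast
    also have "\<dots> = Fs (Dx ((Dx^^a) c)) p q" using pdx_Fs[OF Suc[THEN conjunct1] q] .
    finally show "(pdx^^Suc a) (Fs c p) q = Fs ((Dx^^Suc a) c) p q" by simp
  qed
  thus ?case using g' by simp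
qed

lemma Dx_pow: "(Dx^^a) d i j = fact (i+a) / fact i * d (i+a) j"
proof (induction a arbitrary: i)
  case 0 thus ?case by simp
next
  case (Suc a)
  have "(Dx^^Suc a) d i j = real (i+1) * ((Dx^^a) d) (i+1) j" by (simp add: Dx_def)
  also have "\<dots> = real (i+1) * (fact (i+1+a) / fact (i+1) * d (i+1+a) j)" using Suc by simp
  also have "\<dots> = fact (i + Suc a) / fact i * d (i + Suc a) j"
    by (simp add: field_simps fact_Suc del: of_nat_Suc)
  finally show ?case .
qed

lemma Dy_pow: "(Dy^^b) d i j = fact (j+b) / fact j * d i (j+b)"
proof (induction b arbitrary: j)
  case 0 thus ?case by simp
next
  case (Suc b)
  have "(Dy^^Suc b) d i j = real (j+1) * ((Dy^^b) d) i (j+1)" by (simp add: Dy_def)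
  also have "\<dots> = real (j+1) * (fact (j+1+b) / fact (j+1) * d i (j+1+b))" using Suc by simp
  also have "\<dots> = fact (j + Suc b) / fact j * d i (j + Suc b)"
    by (simp add: field_simps fact_Suc del: of_nat_Suc)
  finally show ?case .
qed

lemma Fs_center: "Fs d p p = d 0 0"
proof -
  have "Fs d p p = infsum (\<lambda>(a,b). d a b * 0^a * (0::real)^b) {(0,0)}"
    unfolding Fs_def by (intro infsum_cong_neutral) auto
  thus ?thesis by simp
qed

lemma pderiv2_Fs:
  assumes g: "good c \<rho>" and r: "\<rho> > 0"
  shows "pderiv2 a b (Fs c p) p = fact a * fact b * c a b"
proof -
  have 1: "\<forall>q\<in>Sq p \<rho>. (pdy^^b) (Fs c p) q = Fs ((Dy^^b) c) p q" and g1: "good ((Dy^^b) c) \<rho>"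
    using pdy_pow_Fs[OF g] by auto
  have "pderiv2 a b (Fs c p) p = (pdx^^a) (Fs ((Dy^^b) c) p) p"
    unfolding pderiv2_def using pdx_pow_local[OF open_Sq 1] center_Sq[OF r] by blast
  also have "\<dots> = Fs ((Dx^^a) ((Dy^^b) c)) p p" using pdx_pow_Fs[OF g1] center_Sq[OF r] by blast
  also have "\<dots> = fact a * fact b * c a b" by (simp add: Fs_center Dx_pow Dy_pow)
  finally show ?thesis .
qed

lemma pdx_zero: "pdx (\<lambda>_. 0) = (\<lambda>_. 0)"
  by (auto simp: pdx_def)
lemma pdy_zero: "pdy (\<lambda>_. 0) = (\<lambda>_. 0)"
  by (auto simp: pdy_def)

lemma pderiv2_zero: "pderiv2 a b (\<lambda>_. 0) q = 0"
proof -
  have "(pdy^^b) (\<lambda>_. 0) = (\<lambda>_. 0)" by (induction b) (auto simp: pdy_zero)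
  moreover have "(pdx^^a) (\<lambda>_. 0) = (\<lambda>_. 0)" by (induction a) (auto simp: pdx_zero)
  ultimately show ?thesis by (simp add: pderiv2_def)
qed

lemma Fs_unique:
  assumes g: "good d \<rho>" and r: "\<rho> > 0" and z: "\<forall>q\<in>Sq p \<rho>. Fs d p q = 0"
  shows "d a b = 0"
proof -
  have "pderiv2 a b (Fs d p) p = pderiv2 a b (\<lambda>_. 0) p"
    using pderiv2_local[OF open_Sq z center_Sq[OF r]] .
  hence "fact a * fact b * d a b = 0" using pderiv2_Fs[OF g r] pderiv2_zero by simp
  thus ?thesis by simp
qed



lemma diag_bij: "bij_betw (\<lambda>(n::nat,k::nat). (n-k,k)) (Sigma UNIV (\<lambda>n. {..n})) UNIV"
  unfolding bij_betw_def
proof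
  show "inj_on (\<lambda>(n::nat,k::nat). (n-k,k)) (Sigma UNIV (\<lambda>n. {..n}))"
    by (auto simp: inj_on_def)
  show "(\<lambda>(n::nat,k::nat). (n-k,k)) ` (Sigma UNIV (\<lambda>n. {..n})) = UNIV"
  proof (intro equalityI subsetI)
    fix z :: "nat \<times> nat" obtain a b where z: "z = (a,b)" by fastforce
    show "z \<in> (\<lambda>(n::nat,k::nat). (n-k,k)) ` (Sigma UNIV (\<lambda>n. {..n}))"
      unfolding z by (rule image_eqI[of _ _ "(a+b,b)"]) auto
  qed auto
qed

lemma ray_series:
  assumes g: "good d \<rho>" and v: "\<bar>fst v\<bar> \<le> 1" "\<bar>snd v\<bar> \<le> 1" and t: "0 \<le> t" "t < \<rho>"
  shows "(\<lambda>n. (\<Sum>k\<le>n. d (n-k) k * fst v^(n-k) * snd v^k) * t^n) sums Fs d p (p + t *\<^sub>R v)"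
proof -
  define f where "f = (\<lambda>(a,b). d a b * (t * fst v)^a * (t * snd v)^b)"
  have "\<bar>t * fst v\<bar> \<le> t" "\<bar>t * snd v\<bar> \<le> t" using v t by (auto simp: abs_mult intro: mult_left_le)
  hence "f summable_on UNIV" unfolding f_def using t by (intro summable_at[OF g]) auto
  hence "(f has_sum Fs d p (p + t *\<^sub>R v)) UNIV" by (simp add: Fs_def f_def)
  hence "((\<lambda>x. f ((\<lambda>(n,k). (n-k,k)) x)) has_sum Fs d p (p + t *\<^sub>R v)) (Sigma UNIV (\<lambda>n. {..n}))"
    using has_sum_reindex_bij_betw[OF diag_bij] by blast
  hence "((\<lambda>n. \<Sum>k\<le>n. f (n-k,k)) has_sum Fs d p (p + t *\<^sub>R v)) UNIV"
    by (rule has_sum_Sigma') auto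
  moreover have "(\<Sum>k\<le>n. f (n-k,k)) = (\<Sum>k\<le>n. d (n-k) k * fst v^(n-k) * snd v^k) * t^n" for n
  proof -
    have "(\<Sum>k\<le>n. f (n-k,k)) = (\<Sum>k\<le>n. d (n-k) k * fst v^(n-k) * snd v^k * t^n)"
    proof (intro sum.cong refl)
      fix k assume "k \<in> {..n}" hence k: "k \<le> n" by simp
      have "t^n = t^(n-k) * t^k" using k by (simp flip: power_add)
      thus "f (n-k,k) = d (n-k) k * fst v^(n-k) * snd v^k * t^n"
        by (simp add: f_def power_mult_distrib)
    qed
    thus ?thesis by (simp add: sum_distrib_right)
  qed
  ultimately show ?thesis by (simp add: has_sum_imp_sums)
qed

lemma ray:
  assumes g: "good d \<rho>" and r: "\<rho> > 0" and low: "\<forall>a b. a + b < K \<longrightarrow> d a b = 0"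
    and v: "\<bar>fst v\<bar> \<le> 1" "\<bar>snd v\<bar> \<le> 1" and dl: "\<delta> > 0"
    and z: "\<forall>t. 0 < t \<and> t < \<delta> \<longrightarrow> Fs d p (p + t *\<^sub>R v) = 0"
  shows "(\<Sum>k\<le>K. d (K-k) k * fst v^(K-k) * snd v^k) = 0"
proof -
  define G where "G = (\<lambda>n. (\<Sum>k\<le>n. d (n-k) k * fst v^(n-k) * snd v^k))"
  have G0: "G i = 0" if "i < K" for i
    unfolding G_def using low that by (intro sum.neutral) auto
  define H where "H = (\<lambda>m. G (m + K))"
  have Hs: "(\<lambda>m. H m * t^m) sums (Fs d p (p + t *\<^sub>R v) / t^K)" if t: "0 < t" "t < \<rho>" for t
  proof -
    have "(\<lambda>n. G n * t^n) sums Fs d p (p + t *\<^sub>R v)" using ray_series[OF g v, of t] t by (simp add: G_def)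
    from sums_split_initial_segment[OF this, of K]
    have "(\<lambda>i. G (i+K) * t^(i+K)) sums Fs d p (p + t *\<^sub>R v)" using G0 by simp
    from sums_divide[OF this, of "t^K"]
    show ?thesis using t by (simp add: H_def power_add)
  qed
  define t1 where "t1 = min \<rho> \<delta> / 2"
  have t1: "0 < t1" "t1 < \<rho>" "t1 < \<delta>" using r dl by (auto simp: t1_def)
  have "summable (\<lambda>m. H m * t1^m)" using Hs[OF t1(1,2)] by (simp add: sums_iff)
  hence "isCont (\<lambda>t. \<Sum>m. H m * t^m) 0" by (rule isCont_powser) (use t1 in simp)
  hence "((\<lambda>t. \<Sum>m. H m * t^m) \<longlongrightarrow> H 0) (at 0)" by (simp add: isCont_def)
  hence L: "((\<lambda>t. \<Sum>m. H m * t^m) \<longlongrightarrow> H 0) (at_right 0)"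
    by (rule tendsto_within_subset) simp
  have "eventually (\<lambda>t. (\<Sum>m. H m * t^m) = 0) (at_right (0::real))"
    unfolding eventually_at_right_field
  proof (intro exI[of _ t1] conjI allI impI)
    fix t :: real assume "0 < t" "t < t1"
    hence "0 < t" "t < \<rho>" "t < \<delta>" using t1 by auto
    thus "(\<Sum>m. H m * t^m) = 0" using Hs[of t] z by (simp add: sums_iff)
  qed (use t1 in auto)
  hence "((\<lambda>t. \<Sum>m. H m * t^m) \<longlongrightarrow> 0) (at_right (0::real))"
    by (rule tendsto_eventually)
  from tendsto_unique[OF _ L this] have "H 0 = 0" by simp
  thus ?thesis by (simp add: H_def G_def)
qed



definition RR :: "nat \<Rightarrow> nat \<Rightarrow> real" where "RR n k = real (n choose k) * Re (\<i>^k)"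
definition II :: "nat \<Rightarrow> nat \<Rightarrow> real" where "II n k = real (n choose k) * Im (\<i>^k)"

lemma cpow_expand:
  "(Complex x y)^n = (\<Sum>k\<le>n. of_nat (n choose k) * \<i>^k * complex_of_real (x^(n-k) * y^k))"
proof -
  have "Complex x y = \<i> * of_real y + of_real x" by (simp add: complex_eq_iff)
  hence "(Complex x y)^n = (\<i> * of_real y + of_real x)^n" by simp
  also have "\<dots> = (\<Sum>k\<le>n. of_nat (n choose k) * (\<i> * of_real y)^k * (of_real x)^(n-k))"
    by (rule binomial_ring)
  also have "\<dots> = (\<Sum>k\<le>n. of_nat (n choose k) * \<i>^k * complex_of_real (x^(n-k) * y^k))"
    by (intro sum.cong refl) (simp add: power_mult_distrib)
  finally show ?thesis .
qed

lemma Re_term: "Re (of_nat m * z * complex_of_real r) = real m * r * Re z"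
  by simp
lemma Im_term: "Im (of_nat m * z * complex_of_real r) = real m * r * Im z"
  by simp

lemma Re_pow: "Re ((Complex x y)^n) = (\<Sum>k\<le>n. RR n k * x^(n-k) * y^k)"
  by (simp add: cpow_expand Re_sum RR_def algebra_simps)

lemma Im_pow: "Im ((Complex x y)^n) = (\<Sum>k\<le>n. II n k * x^(n-k) * y^k)"
  by (simp add: cpow_expand Im_sum II_def algebra_simps)

lemma binom_id1: "real N * real ((N-1) choose k) = real (N-k) * real (N choose k)"
proof -
  have "(N - k) * (N choose k) = N * ((N - 1) choose k)" by (rule binomial_absorb_comp)
  hence "real ((N - k) * (N choose k)) = real (N * ((N - 1) choose k))" by metis
  thus ?thesis by simp
qed

lemma binom_id2: "real N * real ((N-1) choose k) = real (k+1) * real (N choose (k+1))"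
proof -
  have "Suc k * (N choose Suc k) = N * ((N - 1) choose k)" by (rule binomial_absorption)
  hence "real (Suc k * (N choose Suc k)) = real (N * ((N - 1) choose k))" by metis
  thus ?thesis by (simp only: of_nat_mult) simp
qed

lemma deriv_expand:
  "of_nat N * Complex n1 n2 * (Complex x y)^(N-1) =
   (\<Sum>k\<le>N-1. (complex_of_real (n1 * real (N-k) * real (N choose k)) * \<i>^k
      + complex_of_real (n2 * real (k+1) * real (N choose (k+1))) * \<i>^(k+1)) * complex_of_real (x^(N-1-k) * y^k))"
proof -
  have "Complex n1 n2 = of_real n1 + \<i> * of_real n2" by (simp add: complex_eq_iff)
  hence "of_nat N * Complex n1 n2 * (Complex x y)^(N-1) =
     (\<Sum>k\<le>N-1. (of_nat N * (of_real n1 + \<i> * of_real n2)) * (of_nat ((N-1) choose k) * \<i>^k * complex_of_real (x^(N-1-k) * y^k)))"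
    by (simp add: cpow_expand sum_distrib_left)
  also have "\<dots> = (\<Sum>k\<le>N-1. (complex_of_real (n1 * real (N-k) * real (N choose k)) * \<i>^k
      + complex_of_real (n2 * real (k+1) * real (N choose (k+1))) * \<i>^(k+1)) * complex_of_real (x^(N-1-k) * y^k))"
  proof (intro sum.cong refl)
    fix k
    have e1: "complex_of_real (real N * real ((N-1) choose k)) = complex_of_real (real (N-k) * real (N choose k))"
      using binom_id1 by metis
    have e2: "complex_of_real (real N * real ((N-1) choose k)) = complex_of_real (real (k+1) * real (N choose (k+1)))"
      using binom_id2 by metis
    have "(of_nat N * (of_real n1 + \<i> * of_real n2)) * (of_nat ((N-1) choose k) * \<i>^k * complex_of_real (x^(N-1-k) * y^k))
       = (of_real n1 * complex_of_real (real N * real ((N-1) choose k)) * \<i>^k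
          + of_real n2 * complex_of_real (real N * real ((N-1) choose k)) * \<i>^(k+1)) * complex_of_real (x^(N-1-k) * y^k)"
      by (simp add: algebra_simps)
    also have "\<dots> = (of_real n1 * complex_of_real (real (N-k) * real (N choose k)) * \<i>^k
          + of_real n2 * complex_of_real (real (k+1) * real (N choose (k+1))) * \<i>^(k+1)) * complex_of_real (x^(N-1-k) * y^k)"
      using e1 e2 by metis
    finally show "(of_nat N * (of_real n1 + \<i> * of_real n2)) * (of_nat ((N-1) choose k) * \<i>^k * complex_of_real (x^(N-1-k) * y^k))
       = (complex_of_real (n1 * real (N-k) * real (N choose k)) * \<i>^k
      + complex_of_real (n2 * real (k+1) * real (N choose (k+1))) * \<i>^(k+1)) * complex_of_real (x^(N-1-k) * y^k)"
      by (simp add: algebra_simps)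
  qed
  finally show ?thesis .
qed

lemma Re_deriv:
  "Re (of_nat N * Complex n1 n2 * (Complex x y)^(N-1)) =
   (\<Sum>k\<le>N-1. (n1 * real (N-k) * RR N k + n2 * real (k+1) * RR N (k+1)) * x^(N-1-k) * y^k)"
  unfolding deriv_expand by (simp add: Re_sum RR_def algebra_simps)

lemma Im_deriv:
  "Im (of_nat N * Complex n1 n2 * (Complex x y)^(N-1)) =
   (\<Sum>k\<le>N-1. (n1 * real (N-k) * II N k + n2 * real (k+1) * II N (k+1)) * x^(N-1-k) * y^k)"
  unfolding deriv_expand by (simp add: Im_sum II_def algebra_simps)



lemma binom_rec_nat:
  assumes "j + 2 \<le> N"
  shows "(j+1)*(j+2)*(N choose (j+2)) = (N-j)*(N-j-1)*(N choose j)"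
proof -
  have h1: "Suc (Suc j) * (N choose Suc (Suc j)) = N * ((N-1) choose Suc j)" by (rule binomial_absorption)
  have h2: "Suc j * ((N-1) choose Suc j) = (N-1) * ((N-1-1) choose j)" by (rule binomial_absorption)
  have h3: "(N-j) * (N choose j) = N * ((N-1) choose j)" by (rule binomial_absorb_comp)
  have h4: "(N-1-j) * ((N-1) choose j) = (N-1) * ((N-1-1) choose j)" by (rule binomial_absorb_comp)
  have "(j+1)*(j+2)*(N choose (j+2)) = (j+1) * (Suc (Suc j) * (N choose Suc (Suc j)))"
    by (simp only: mult.assoc add_2_eq_Suc')
  also have "\<dots> = N * (Suc j * ((N-1) choose Suc j))" unfolding h1 by (simp add: algebra_simps)
  also have "\<dots> = N * ((N-1) * ((N-1-1) choose j))" unfolding h2 ..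
  also have "\<dots> = N * ((N-1-j) * ((N-1) choose j))" unfolding h4 ..
  also have "\<dots> = (N-1-j) * (N * ((N-1) choose j))" by simp
  also have "\<dots> = (N-1-j) * ((N-j) * (N choose j))" unfolding h3 ..
  also have "\<dots> = (N-j)*(N-j-1)*(N choose j)" by (metis diff_commute mult.commute mult.assoc)
  finally show ?thesis .
qed

lemma binom_rec_real:
  assumes "j + 2 \<le> N"
  shows "real ((j+1)*(j+2)) * real (N choose (j+2)) = real ((N-j)*(N-j-1)) * real (N choose j)"
proof -
  have "real ((j+1)*(j+2)*(N choose (j+2))) = real ((N-j)*(N-j-1)*(N choose j))"
    using binom_rec_nat[OF assms] by metis
  thus ?thesis by (simp only: of_nat_mult)
qed

lemma i_pow2: "\<i>^(j+2) = - (\<i>^j)"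
  by (simp add: power_add)

lemma RR_rec:
  assumes "j + 2 \<le> N"
  shows "real ((N-j)*(N-j-1)) * RR N j + real ((j+1)*(j+2)) * RR N (j+2) = 0"
proof -
  have "real ((j+1)*(j+2)) * RR N (j+2) = (real ((j+1)*(j+2)) * real (N choose (j+2))) * Re (\<i>^(j+2))"
    by (simp add: RR_def)
  also have "\<dots> = - (real ((N-j)*(N-j-1)) * RR N j)"
    unfolding binom_rec_real[OF assms] i_pow2 by (simp add: RR_def)
  finally show ?thesis by simp
qed

lemma II_rec:
  assumes "j + 2 \<le> N"
  shows "real ((N-j)*(N-j-1)) * II N j + real ((j+1)*(j+2)) * II N (j+2) = 0"
proof -
  have "real ((j+1)*(j+2)) * II N (j+2) = (real ((j+1)*(j+2)) * real (N choose (j+2))) * Im (\<i>^(j+2))"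
    by (simp add: II_def)
  also have "\<dots> = - (real ((N-j)*(N-j-1)) * II N j)"
    unfolding binom_rec_real[OF assms] i_pow2 by (simp add: II_def)
  finally show ?thesis by simp
qed

lemma coeff_form:
  fixes c :: "nat \<Rightarrow> nat \<Rightarrow> real"
  assumes N: "N \<ge> 1"
    and rec: "\<forall>k. k + 2 \<le> N \<longrightarrow> real ((N-k)*(N-k-1)) * c (N-k) k + real ((k+1)*(k+2)) * c (N-k-2) (k+2) = 0"
  shows "\<forall>k\<le>N. c (N-k) k = c N 0 * RR N k + (c (N-1) 1 / real N) * II N k"
proof (intro allI impI)
  fix k assume "k \<le> N"
  thus "c (N-k) k = c N 0 * RR N k + (c (N-1) 1 / real N) * II N k"
  proof (induction k rule: less_induct)
    case (less k)
    show ?case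
    proof (cases k)
      case 0 thus ?thesis by (simp add: RR_def II_def)
    next
      case (Suc k')
      show ?thesis
      proof (cases k')
        case 0 thus ?thesis using Suc N by (simp add: RR_def II_def)
      next
        case (Suc j)
        have k: "k = j + 2" using Suc \<open>k = Suc k'\<close> by simp
        have jN: "j + 2 \<le> N" using less.prems k by simp
        have IH: "c (N-j) j = c N 0 * RR N j + (c (N-1) 1 / real N) * II N j"
          using less.IH[of j] k less.prems by simp
        define X where "X = real ((j+1)*(j+2))"
        define Y where "Y = real ((N-j)*(N-j-1))"
        have "(j+1)*(j+2) \<noteq> (0::nat)" by simp
        hence X: "X \<noteq> 0" by (simp only: X_def of_nat_eq_0_iff) simp
        have r1: "Y * c (N-j) j + X * c (N-j-2) (j+2) = 0" using rec jN by (simp add: X_def Y_def)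
        have r2: "Y * RR N j + X * RR N (j+2) = 0" using RR_rec[OF jN] by (simp add: X_def Y_def)
        have r3: "Y * II N j + X * II N (j+2) = 0" using II_rec[OF jN] by (simp add: X_def Y_def)
        define B where "B = c (N-1) 1 / real N"
        have e2: "-(Y * RR N j) = X * RR N (j+2)" using r2 by linarith
        have e3: "-(Y * II N j) = X * II N (j+2)" using r3 by linarith
        have "X * c (N-j-2) (j+2) = - (Y * c (N-j) j)" using r1 by linarith
        also have "\<dots> = c N 0 * (-(Y * RR N j)) + B * (-(Y * II N j))"
          using IH by (simp add: B_def algebra_simps)
        also have "\<dots> = X * (c N 0 * RR N (j+2) + (c (N-1) 1 / real N) * II N (j+2))"
          unfolding e2 e3 by (simp add: B_def algebra_simps)
        finally have "X * c (N-j-2) (j+2) = X * (c N 0 * RR N (j+2) + (c (N-1) 1 / real N) * II N (j+2))" .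
        hence "c (N-j-2) (j+2) = c N 0 * RR N (j+2) + (c (N-1) 1 / real N) * II N (j+2)"
          using X by simp
        thus ?thesis using k by (simp add: diff_diff_add)
      qed
    qed
  qed
qed



lemma cos_irrat_ne0:
  assumes N: "N \<ge> 1" and irr: "\<alpha> \<notin> \<rat>"
  shows "cos (real N * \<alpha> * pi) \<noteq> 0"
proof
  assume "cos (real N * \<alpha> * pi) = 0"
  then obtain n :: nat where "real N * \<alpha> * pi = real n * (pi/2) \<or> real N * \<alpha> * pi = - (real n * (pi/2))"
    unfolding cos_zero_iff by blast
  hence "(real N * \<alpha>) * pi = (real n / 2) * pi \<or> (real N * \<alpha>) * pi = (- (real n / 2)) * pi"
    by (auto simp: algebra_simps)
  hence h: "real N * \<alpha> = real n / 2 \<or> real N * \<alpha> = - (real n / 2)"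
    by (metis mult_right_cancel pi_neq_zero)
  have Npos: "real N > 0" using N by simp
  have "\<alpha> = (real N * \<alpha>) / real N" using Npos by simp
  hence "\<alpha> = (real n / 2) / real N \<or> \<alpha> = (- (real n / 2)) / real N" using h by metis
  hence "\<alpha> \<in> \<rat>" by (auto intro!: Rats_divide simp: Rats_minus_iff)
  with irr show False by simp
qed

lemma Complex_cis: "Complex (cos t) (sin t) = cis t"
  by (simp add: complex_eq_iff)

lemma alg_main:
  fixes c :: "nat \<Rightarrow> nat \<Rightarrow> real"
  assumes N: "N \<ge> 1"
    and rec: "\<forall>k. k + 2 \<le> N \<longrightarrow> real ((N-k)*(N-k-1)) * c (N-k) k + real ((k+1)*(k+2)) * c (N-k-2) (k+2) = 0"
    and P: "(\<Sum>k\<le>N. c (N-k) k * cos (\<theta> + \<alpha>*pi)^(N-k) * sin (\<theta> + \<alpha>*pi)^k) = 0"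
    and Q: "(\<Sum>k\<le>N-1. (- sin \<theta> * (real (N-1-k+1) * c (N-1-k+1) k) + cos \<theta> * (real (k+1) * c (N-1-k) (k+1)))
              * cos \<theta>^(N-1-k) * sin \<theta>^k) = 0"
    and irr: "\<alpha> \<notin> \<rat>"
  shows "\<forall>k\<le>N. c (N-k) k = 0"
proof -
  define A where "A = c N 0"
  define B where "B = c (N-1) 1 / real N"
  have cf: "\<And>k. k \<le> N \<Longrightarrow> c (N-k) k = A * RR N k + B * II N k"
    using coeff_form[OF N rec] by (simp add: A_def B_def)
  define x where "x = cos (\<theta> + \<alpha>*pi)"
  define y where "y = sin (\<theta> + \<alpha>*pi)"
  have "(\<Sum>k\<le>N. c (N-k) k * x^(N-k) * y^k) = (\<Sum>k\<le>N. A * (RR N k * x^(N-k) * y^k) + B * (II N k * x^(N-k) * y^k))"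
    by (intro sum.cong refl) (simp add: cf algebra_simps)
  also have "\<dots> = A * Re ((Complex x y)^N) + B * Im ((Complex x y)^N)"
    by (simp add: Re_pow Im_pow sum.distrib sum_distrib_left)
  also have "\<dots> = A * cos (real N * (\<theta> + \<alpha>*pi)) + B * sin (real N * (\<theta> + \<alpha>*pi))"
    by (simp add: x_def y_def Complex_cis Complex.DeMoivre)
  finally have P2: "A * cos (real N * \<theta> + real N * \<alpha> * pi) + B * sin (real N * \<theta> + real N * \<alpha> * pi) = 0"
    using P by (simp add: x_def y_def algebra_simps)
  define e1 where "e1 = cos \<theta>"
  define e2 where "e2 = sin \<theta>"
  have "(\<Sum>k\<le>N-1. (- sin \<theta> * (real (N-1-k+1) * c (N-1-k+1) k) + cos \<theta> * (real (k+1) * c (N-1-k) (k+1)))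
              * cos \<theta>^(N-1-k) * sin \<theta>^k)
      = (\<Sum>k\<le>N-1. A * ((- e2 * real (N-k) * RR N k + e1 * real (k+1) * RR N (k+1)) * e1^(N-1-k) * e2^k)
                 + B * ((- e2 * real (N-k) * II N k + e1 * real (k+1) * II N (k+1)) * e1^(N-1-k) * e2^k))"
  proof (intro sum.cong refl)
    fix k assume "k \<in> {..N-1}"
    hence k: "k \<le> N - 1" by simp
    have i1: "N-1-k+1 = N-k" using k N by simp
    have i2: "N-1-k = N-(k+1)" by simp
    have c1: "c (N-1-k+1) k = A * RR N k + B * II N k" using cf k i1 by simp
    have c2: "c (N-1-k) (k+1) = A * RR N (k+1) + B * II N (k+1)" using cf[of "k+1"] k N i2 by simp
    have r1: "real (N-1-k+1) = real (N-k)" using i1 by simp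
    show "(- sin \<theta> * (real (N-1-k+1) * c (N-1-k+1) k) + cos \<theta> * (real (k+1) * c (N-1-k) (k+1)))
              * cos \<theta>^(N-1-k) * sin \<theta>^k
       = A * ((- e2 * real (N-k) * RR N k + e1 * real (k+1) * RR N (k+1)) * e1^(N-1-k) * e2^k)
                 + B * ((- e2 * real (N-k) * II N k + e1 * real (k+1) * II N (k+1)) * e1^(N-1-k) * e2^k)"
      unfolding r1 c1 c2 e1_def e2_def by (simp add: algebra_simps)
  qed
  also have "\<dots> = A * Re (of_nat N * Complex (-e2) e1 * (Complex e1 e2)^(N-1))
                + B * Im (of_nat N * Complex (-e2) e1 * (Complex e1 e2)^(N-1))"
    unfolding Re_deriv Im_deriv by (simp add: sum.distrib sum_distrib_left)
  also have "of_nat N * Complex (-e2) e1 * (Complex e1 e2)^(N-1) = of_nat N * \<i> * cis (real N * \<theta>)"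
  proof -
    have "Complex (-e2) e1 = \<i> * cis \<theta>" by (simp add: complex_eq_iff e1_def e2_def)
    moreover have "(Complex e1 e2)^(N-1) = cis (real (N-1) * \<theta>)" by (simp add: e1_def e2_def Complex_cis Complex.DeMoivre)
    moreover have "cis \<theta> * cis (real (N-1) * \<theta>) = cis (real N * \<theta>)"
      using N by (simp add: cis_mult of_nat_diff algebra_simps)
    ultimately show ?thesis by (simp add: mult.assoc)
  qed
  finally have Q2: "- A * real N * sin (real N * \<theta>) + B * real N * cos (real N * \<theta>) = 0"
    using Q by simp
  have Q3: "- A * sin (real N * \<theta>) + B * cos (real N * \<theta>) = 0"
  proof -
    have "real N * (- A * sin (real N * \<theta>) + B * cos (real N * \<theta>)) = 0" using Q2 by (simp add: algebra_simps)
    thus ?thesis using N by simp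
  qed
  define s where "s = sin (real N * \<theta>)"
  define co where "co = cos (real N * \<theta>)"
  define \<beta> where "\<beta> = real N * \<alpha> * pi"
  have cb: "cos \<beta> \<noteq> 0" unfolding \<beta>_def by (rule cos_irrat_ne0[OF N irr])
  have P3: "cos \<beta> * (A * co + B * s) + sin \<beta> * (- A * s + B * co) = 0"
    using P2 unfolding cos_add sin_add s_def co_def \<beta>_def by (simp add: algebra_simps)
  have Q4: "- A * s + B * co = 0" using Q3 by (simp add: s_def co_def)
  have "A * co + B * s = 0" using P3 Q4 cb by simp
  have sc: "s^2 + co^2 = 1" by (simp add: s_def co_def)
  have "co * (A * co + B * s) - s * (- A * s + B * co) = A * (s^2 + co^2)"
    by (simp add: algebra_simps power2_eq_square)
  hence "A = co * (A * co + B * s) - s * (- A * s + B * co)" using sc by simp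
  hence A0: "A = 0" using \<open>A * co + B * s = 0\<close> Q4 by simp
  have "s * (A * co + B * s) + co * (- A * s + B * co) = B * (s^2 + co^2)"
    by (simp add: algebra_simps power2_eq_square)
  hence "B = s * (A * co + B * s) + co * (- A * s + B * co)" using sc by simp
  hence B0: "B = 0" using \<open>A * co + B * s = 0\<close> Q4 by simp
  show ?thesis using cf A0 B0 by simp
qed



lemma dist_Sq:
  assumes "q \<in> Sq p \<rho>"
  shows "dist q p < 2 * \<rho>"
proof -
  obtain a b where q: "q = (a,b)" by fastforce
  obtain a' b' where p: "p = (a',b')" by fastforce
  have "dist q p = sqrt ((a - a')^2 + (b - b')^2)"
    by (simp add: q p dist_Pair_Pair dist_real_def)
  also have "\<dots> \<le> \<bar>a - a'\<bar> + \<bar>b - b'\<bar>" by (rule sqrt_sum_squares_le_sum_abs)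
  also have "\<dots> < 2 * \<rho>" using assms by (simp add: Sq_def q p)
  finally show ?thesis .
qed

lemma analytic_local:
  assumes an: "real_analytic_on2 u \<Omega>" and o: "open \<Omega>" and x0: "x0 \<in> \<Omega>"
  obtains \<rho> c where "\<rho> > 0" "good c \<rho>" "Sq x0 \<rho> \<subseteq> \<Omega>" "\<forall>q\<in>Sq x0 \<rho>. u q = Fs c x0 q"
proof -
  obtain r c where r: "r > 0" and hs: "\<forall>q\<in>ball x0 r.
      ((\<lambda>(a,b). c a b * (fst q - fst x0)^a * (snd q - snd x0)^b) has_sum u q) UNIV"
    using an x0 unfolding real_analytic_on2_def by blast
  obtain \<epsilon> where e: "\<epsilon> > 0" "ball x0 \<epsilon> \<subseteq> \<Omega>" using o x0 open_contains_ball by blast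
  define \<rho> where "\<rho> = min r \<epsilon> / 2"
  have \<rho>: "\<rho> > 0" using r e by (simp add: \<rho>_def)
  have sub: "Sq x0 \<rho> \<subseteq> ball x0 r \<inter> ball x0 \<epsilon>"
  proof
    fix q assume "q \<in> Sq x0 \<rho>"
    from dist_Sq[OF this] show "q \<in> ball x0 r \<inter> ball x0 \<epsilon>" by (auto simp: \<rho>_def dist_commute)
  qed
  show ?thesis
  proof (rule that[OF \<rho> _ _ ])
    show "Sq x0 \<rho> \<subseteq> \<Omega>" using sub e by blast
    show "\<forall>q\<in>Sq x0 \<rho>. u q = Fs c x0 q"
      using sub hs unfolding Fs_def by (auto intro!: infsumI[symmetric])
    show "good c \<rho>" unfolding good_def
    proof (intro allI impI)
      fix t :: real assume t: "0 \<le> t \<and> t < \<rho>"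
      define q where "q = (fst x0 + t, snd x0 + t)"
      have "q \<in> Sq x0 \<rho>" using t by (simp add: q_def Sq_def)
      hence "q \<in> ball x0 r" using sub by blast
      hence "(\<lambda>(a,b). c a b * (fst q - fst x0)^a * (snd q - snd x0)^b) summable_on UNIV"
        using hs has_sum_imp_summable by blast
      hence "(\<lambda>(a,b). c a b * t^a * t^b) summable_on UNIV" by (simp add: q_def)
      hence "(\<lambda>z. norm ((\<lambda>(a,b). c a b * t^a * t^b) z)) summable_on UNIV"
        using summable_on_iff_abs_summable_on_real by blast
      moreover have "(\<lambda>z. norm ((\<lambda>(a,b). c a b * t^a * t^b) z)) = (\<lambda>(a,b). \<bar>c a b\<bar> * t^a * t^b)"
        using t by (auto simp: abs_mult)
      ultimately show "(\<lambda>(a,b). \<bar>c a b\<bar> * t^a * t^b) summable_on UNIV" by simp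
    qed
  qed
qed



theorem theorem4p4:
  fixes \<Omega> :: "(real \<times> real) set" and u :: "real \<times> real \<Rightarrow> real"
    and lam h \<alpha> :: real and x0 em ep :: "real \<times> real"
  assumes "open \<Omega>"
    and "lam > 0"
    and "real_analytic_on2 u \<Omega>"
    and "(\<lambda>x. (u x)\<^sup>2) integrable_on \<Omega>"
    and "\<forall>x\<in>\<Omega>. - laplacian u x = lam * u x"
    and "x0 \<in> \<Omega>" and "h > 0"
    and "norm em = 1" and "norm ep = 1"
    and "0 < \<alpha>" and "\<alpha> < 2" and "\<alpha> \<notin> \<rat>"
    and "ep = rot (\<alpha> * pi) em"
    and "segment_from x0 em h \<subseteq> \<Omega>" and "segment_from x0 ep h \<subseteq> \<Omega>"
    and "\<forall>x\<in>segment_from x0 em h. deriv (\<lambda>s. u (x + s *\<^sub>R rot (pi/2) em)) 0 = 0"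
    and "\<forall>x\<in>segment_from x0 ep h. u x = 0"
  shows "Vani u x0 = \<infinity>"
proof -
  note o = assms(1) and an = assms(3) and pde = assms(5) and x0 = assms(6) and hpos = assms(7)
    and nem = assms(8) and irr = assms(12) and epdef = assms(13)
    and normal = assms(16) and nodal = assms(17)
  obtain \<rho> c where \<rho>: "\<rho> > 0" and g: "good c \<rho>" and sub: "Sq x0 \<rho> \<subseteq> \<Omega>"
    and ueq: "\<forall>q\<in>Sq x0 \<rho>. u q = Fs c x0 q"
    using analytic_local[OF an o x0] by blast
  have oS: "open (Sq x0 \<rho>)" by (rule open_Sq)
  have gx: "good (Dx c) \<rho>" and gy: "good (Dy c) \<rho>" using good_Dx[OF g] good_Dy[OF g] .
  have gxx: "good (Dx (Dx c)) \<rho>" and gyy: "good (Dy (Dy c)) \<rho>" using good_Dx[OF gx] good_Dy[OF gy] .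
  have pdxu: "\<forall>q\<in>Sq x0 \<rho>. pdx u q = Fs (Dx c) x0 q"
    using pdx_local[OF oS ueq] pdx_Fs[OF g] by simp
  have pdyu: "\<forall>q\<in>Sq x0 \<rho>. pdy u q = Fs (Dy c) x0 q"
    using pdy_local[OF oS ueq] pdy_Fs[OF g] by simp
  have pdxxu: "\<forall>q\<in>Sq x0 \<rho>. pdx (pdx u) q = Fs (Dx (Dx c)) x0 q"
    using pdx_local[OF oS pdxu] pdx_Fs[OF gx] by simp
  have pdyyu: "\<forall>q\<in>Sq x0 \<rho>. pdy (pdy u) q = Fs (Dy (Dy c)) x0 q"
    using pdy_local[OF oS pdyu] pdy_Fs[OF gy] by simp
  define L where "L = (\<lambda>a b. (\<lambda>a b. Dx (Dx c) a b + Dy (Dy c) a b) a b + lam * c a b)"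
  have gL: "good L \<rho>" unfolding L_def by (intro good_add good_cmult gxx gyy g)
  have FL: "\<forall>q\<in>Sq x0 \<rho>. Fs L x0 q = 0"
  proof
    fix q assume q: "q \<in> Sq x0 \<rho>"
    have "Fs L x0 q = Fs (\<lambda>a b. Dx (Dx c) a b + Dy (Dy c) a b) x0 q + Fs (\<lambda>a b. lam * c a b) x0 q"
      unfolding L_def by (rule Fs_add[OF good_add[OF gxx gyy] good_cmult[OF g] q])
    also have "\<dots> = Fs (Dx (Dx c)) x0 q + Fs (Dy (Dy c)) x0 q + lam * Fs c x0 q"
      using Fs_add[OF gxx gyy q] Fs_cmult by simp
    also have "\<dots> = laplacian u q + lam * u q"
      using pdxxu pdyyu ueq q by (simp add: laplacian_def)
    also have "\<dots> = 0" using pde sub q by force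
    finally show "Fs L x0 q = 0" .
  qed
  have L0: "\<And>a b. L a b = 0" using Fs_unique[OF gL \<rho> FL] by blast
  have "(fst em)^2 + (snd em)^2 = 1"
  proof -
    have "sqrt ((fst em)^2 + (snd em)^2) = 1" using nem by (cases em) (simp add: norm_Pair)
    thus ?thesis by simp
  qed
  then obtain \<theta> where th: "fst em = cos \<theta>" "snd em = sin \<theta>" using sincos_total_2pi by metis
  have ep: "fst ep = cos (\<theta> + \<alpha>*pi)" "snd ep = sin (\<theta> + \<alpha>*pi)"
    using epdef th by (auto simp: rot_def cos_add sin_add algebra_simps)
  have nv: "rot (pi/2) em = (- sin \<theta>, cos \<theta>)" using th by (simp add: rot_def)
  define \<delta> where "\<delta> = min h \<rho>"
  have \<delta>: "\<delta> > 0" using hpos \<rho> by (simp add: \<delta>_def)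
  have inSq: "x0 + t *\<^sub>R v \<in> Sq x0 \<rho>" if "0 \<le> t" "t < \<rho>" "\<bar>fst v\<bar> \<le> 1" "\<bar>snd v\<bar> \<le> 1" for t v
  proof -
    have "\<bar>t * fst v\<bar> \<le> t" "\<bar>t * snd v\<bar> \<le> t" using that by (auto simp: abs_mult intro: mult_left_le)
    thus ?thesis using that by (simp add: Sq_def)
  qed
  have inseg: "x0 + t *\<^sub>R v \<in> segment_from x0 v h" if "0 \<le> t" "t \<le> h" for t v
    using that unfolding segment_from_def by blast
  have b1: "\<bar>fst em\<bar> \<le> 1" "\<bar>snd em\<bar> \<le> 1" "\<bar>fst ep\<bar> \<le> 1" "\<bar>snd ep\<bar> \<le> 1"
    using th ep by auto
  show ?thesis
  proof (cases "\<forall>a b. c a b = 0")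
    case True
    have "pderiv2 a b u x0 = 0" for a b
    proof -
      have "pderiv2 a b u x0 = pderiv2 a b (Fs c x0) x0"
        by (rule pderiv2_local[OF oS ueq center_Sq[OF \<rho>]])
      thus ?thesis using pderiv2_Fs[OF g \<rho>] True by simp
    qed
    thus ?thesis by (simp add: Vani_def)
  next
    case False
    hence ex: "\<exists>n a b. a + b = n \<and> c a b \<noteq> 0" by blast
    define N where "N = (LEAST n. \<exists>a b. a + b = n \<and> c a b \<noteq> 0)"
    obtain a0 b0 where ab0: "a0 + b0 = N" "c a0 b0 \<noteq> 0"
      using LeastI_ex[OF ex] unfolding N_def by blast
    have low: "\<forall>a b. a + b < N \<longrightarrow> c a b = 0"
      using not_less_Least unfolding N_def by blast
    have Pz: "\<forall>t. 0 < t \<and> t < \<delta> \<longrightarrow> Fs c x0 (x0 + t *\<^sub>R ep) = 0"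
    proof (intro allI impI)
      fix t assume t: "0 < t \<and> t < \<delta>"
      hence "t < \<rho>" "t \<le> h" by (auto simp: \<delta>_def)
      thus "Fs c x0 (x0 + t *\<^sub>R ep) = 0"
        using ueq inSq[of t ep] nodal inseg[of t ep] t b1 by auto
    qed
    have P: "(\<Sum>k\<le>N. c (N-k) k * fst ep^(N-k) * snd ep^k) = 0"
      by (rule ray[OF g \<rho> low b1(3,4) \<delta> Pz])
    show ?thesis
    proof (cases "N = 0")
      case True
      hence "c 0 0 = 0" using P by simp
      thus ?thesis using ab0 True by simp
    next
      case False
      hence N1: "N \<ge> 1" by simp
      define n1 where "n1 = - sin \<theta>"
      define n2 where "n2 = cos \<theta>"
      define d where "d = (\<lambda>a b. (\<lambda>a b. n1 * Dx c a b) a b + (\<lambda>a b. n2 * Dy c a b) a b)"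
      have gd: "good d \<rho>" unfolding d_def by (intro good_add good_cmult gx gy)
      have lowd: "\<forall>a b. a + b < N - 1 \<longrightarrow> d a b = 0"
        using low by (auto simp: d_def Dx_def Dy_def)
      have Qz: "\<forall>t. 0 < t \<and> t < \<delta> \<longrightarrow> Fs d x0 (x0 + t *\<^sub>R em) = 0"
      proof (intro allI impI)
        fix t assume t: "0 < t \<and> t < \<delta>"
        hence "t < \<rho>" "t \<le> h" by (auto simp: \<delta>_def)
        define x where "x = x0 + t *\<^sub>R em"
        have xS: "x \<in> Sq x0 \<rho>" using inSq[of t em] t b1 \<open>t < \<rho>\<close> by (simp add: x_def)
        have xseg: "x \<in> segment_from x0 em h" using inseg[of t em] t \<open>t \<le> h\<close> by (simp add: x_def)
        define nn where "nn = rot (pi/2) em"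
        have D: "((\<lambda>s. Fs c x0 (x + s *\<^sub>R nn)) has_real_derivative
             (fst nn * Fs (Dx c) x0 x + snd nn * Fs (Dy c) x0 x)) (at 0)"
          by (rule DIR[OF g xS])
        have oV: "open ((\<lambda>s. x + s *\<^sub>R nn) -` Sq x0 \<rho>)"
          using oS by (intro continuous_open_vimage continuous_intros)
        have D2: "((\<lambda>s. u (x + s *\<^sub>R nn)) has_real_derivative
             (fst nn * Fs (Dx c) x0 x + snd nn * Fs (Dy c) x0 x)) (at 0)"
          by (rule has_field_derivative_transform_within_open[OF D oV]) (use xS ueq in auto)
        have "deriv (\<lambda>s. u (x + s *\<^sub>R nn)) 0 = 0" using normal xseg by (simp add: nn_def)
        hence "fst nn * Fs (Dx c) x0 x + snd nn * Fs (Dy c) x0 x = 0"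
          using DERIV_imp_deriv[OF D2] by simp
        moreover have "Fs d x0 x = n1 * Fs (Dx c) x0 x + n2 * Fs (Dy c) x0 x"
          unfolding d_def using Fs_add[OF good_cmult[OF gx, of n1] good_cmult[OF gy, of n2] xS] Fs_cmult by simp
        ultimately show "Fs d x0 (x0 + t *\<^sub>R em) = 0"
          by (simp add: x_def nn_def nv n1_def n2_def)
      qed
      have Q0: "(\<Sum>k\<le>N-1. d (N-1-k) k * fst em^(N-1-k) * snd em^k) = 0"
        by (rule ray[OF gd \<rho> lowd b1(1,2) \<delta> Qz])
      have Q: "(\<Sum>k\<le>N-1. (- sin \<theta> * (real (N-1-k+1) * c (N-1-k+1) k) + cos \<theta> * (real (k+1) * c (N-1-k) (k+1)))
              * cos \<theta>^(N-1-k) * sin \<theta>^k) = 0"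
        using Q0 by (simp add: d_def Dx_def Dy_def n1_def n2_def th)
      have rec: "\<forall>k. k + 2 \<le> N \<longrightarrow> real ((N-k)*(N-k-1)) * c (N-k) k + real ((k+1)*(k+2)) * c (N-k-2) (k+2) = 0"
      proof (intro allI impI)
        fix k assume k: "k + 2 \<le> N"
        define a where "a = N - k - 2"
        have a: "a + 2 = N - k" "a + 1 = N - k - 1" "a + k < N" using k by (auto simp: a_def)
        have "L a k = 0" by (rule L0)
        hence "real (a+1) * (real (a+2) * c (a+2) k) + real (k+1) * (real (k+2) * c a (k+2)) + lam * c a k = 0"
          by (simp add: L_def Dx_def Dy_def algebra_simps numeral_2_eq_2)
        moreover have "c a k = 0" using low a by simp
        ultimately have E: "real (a+1) * (real (a+2) * c (a+2) k) + real (k+1) * (real (k+2) * c a (k+2)) = 0" by simp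
        have goal': "real ((a+2)*(a+1)) * c (a+2) k + real ((k+1)*(k+2)) * c a (k+2) = 0"
          using E by (simp only: of_nat_mult) (simp add: algebra_simps)
        have Nk: "N = a + k + 2" using k by (simp add: a_def)
        have r1: "a + k + 2 - k = a + 2" and r2: "a + 2 - 1 = a + 1" and r3: "a + 2 - 2 = a" by auto
        show "real ((N-k)*(N-k-1)) * c (N-k) k + real ((k+1)*(k+2)) * c (N-k-2) (k+2) = 0"
          unfolding Nk by (simp only: r1 r2 r3) (rule goal')
      qed
      have "\<forall>k\<le>N. c (N-k) k = 0"
        by (rule alg_main[OF N1 rec _ Q irr]) (use P ep in simp)
      hence "c (N - b0) b0 = 0" using ab0 by simp
      moreover have "N - b0 = a0" using ab0 by simp
      ultimately show ?thesis using ab0 by simp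
    qed
  qed
qed

end
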